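(* Let $G$ be a finite, simple, undirected, connected graph with $n$ vertices and let $\ell$ be an integer with $1\leq \ell\leq n-1$. Then $\beta_\ell^s(G)\geq \ell+1$.
   Context: $d$ is the shortest-path distance; for nonempty $X\subseteq V(G)$, $d(s,X)=\min_{x\in X}d(s,x)$; for $S=\{s_1,\dots,s_k\}$, $\mathcal{D}_S(X)=(d(s_1,X),\dots,d(s_k,X))$. $S\subseteq V(G)$ is an $\ell$-solid-resolving set if $\mathcal{D}_S(X)\neq\mathcal{D}_S(Y)$ for all distinct nonempty $X,Y\subseteq V(G)$ with $|X|\leq\ell$ ($Y$ of arbitrary size). $\beta_\ell^s(G)$, the $\ell$-solid-metric dimension, is the minimum cardinality of an $\ell$-solid-resolving set of $G$. *)

theory Defs
  imports Main
begin

definition simple_graph :: "'a set \<Rightarrow> ('a \<Rightarrow> 'a \<Rightarrow> bool) \<Rightarrow> bool" where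
  "simple_graph V E \<longleftrightarrow> finite V \<and> (\<forall>x y. E x y \<longrightarrow> x \<in> V \<and> y \<in> V)
     \<and> (\<forall>x y. E x y \<longrightarrow> E y x) \<and> (\<forall>x. \<not> E x x)"

definition is_walk :: "'a set \<Rightarrow> ('a \<Rightarrow> 'a \<Rightarrow> bool) \<Rightarrow> 'a list \<Rightarrow> bool" where
  "is_walk V E xs \<longleftrightarrow> xs \<noteq> [] \<and> set xs \<subseteq> V \<and>
     (\<forall>i. Suc i < length xs \<longrightarrow> E (xs ! i) (xs ! Suc i))"

definition connected_graph :: "'a set \<Rightarrow> ('a \<Rightarrow> 'a \<Rightarrow> bool) \<Rightarrow> bool" where
  "connected_graph V E \<longleftrightarrow> (\<forall>u\<in>V. \<forall>v\<in>V. \<exists>xs. is_walk V E xs \<and> hd xs = u \<and> last xs = v)"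

definition gdist :: "'a set \<Rightarrow> ('a \<Rightarrow> 'a \<Rightarrow> bool) \<Rightarrow> 'a \<Rightarrow> 'a \<Rightarrow> nat" where
  "gdist V E u v = (LEAST n. \<exists>xs. is_walk V E xs \<and> hd xs = u \<and> last xs = v \<and> length xs = Suc n)"

definition setdist :: "'a set \<Rightarrow> ('a \<Rightarrow> 'a \<Rightarrow> bool) \<Rightarrow> 'a \<Rightarrow> 'a set \<Rightarrow> nat" where
  "setdist V E s X = Min ((gdist V E s) ` X)"

definition dist_vec :: "'a set \<Rightarrow> ('a \<Rightarrow> 'a \<Rightarrow> bool) \<Rightarrow> 'a set \<Rightarrow> 'a set \<Rightarrow> ('a \<Rightarrow> nat)" where
  "dist_vec V E S X = (\<lambda>s. if s \<in> S then setdist V E s X else 0)"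

definition solid_resolving :: "'a set \<Rightarrow> ('a \<Rightarrow> 'a \<Rightarrow> bool) \<Rightarrow> nat \<Rightarrow> 'a set \<Rightarrow> bool" where
  "solid_resolving V E l S \<longleftrightarrow> S \<subseteq> V \<and>
     (\<forall>X Y. X \<subseteq> V \<and> Y \<subseteq> V \<and> X \<noteq> {} \<and> Y \<noteq> {} \<and> X \<noteq> Y \<and> card X \<le> l
        \<longrightarrow> dist_vec V E S X \<noteq> dist_vec V E S Y)"

definition solid_metric_dim :: "'a set \<Rightarrow> ('a \<Rightarrow> 'a \<Rightarrow> bool) \<Rightarrow> nat \<Rightarrow> nat" where
  "solid_metric_dim V E l = (LEAST k. \<exists>S. solid_resolving V E l S \<and> card S = k)"

end

theory Submission
  imports Defs
begin

lemma gdist_self: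
  assumes "v \<in> V" shows "gdist V E v v = 0"
proof -
  have "is_walk V E [v]" using assms by (simp add: is_walk_def)
  then show ?thesis unfolding gdist_def
    by (intro Least_eq_0) (rule exI[of _ "[v]"], simp)
qed

lemma gdist_zero:
  assumes "connected_graph V E" "u \<in> V" "v \<in> V" "gdist V E u v = 0"
  shows "u = v"
proof -
  obtain xs where xs: "is_walk V E xs" "hd xs = u" "last xs = v"
    using assms unfolding connected_graph_def by blast
  have "\<exists>n xs. is_walk V E xs \<and> hd xs = u \<and> last xs = v \<and> length xs = Suc n"
    using xs by (metis is_walk_def length_greater_0_conv Suc_pred)
  then have "\<exists>xs. is_walk V E xs \<and> hd xs = u \<and> last xs = v \<and> length xs = Suc (gdist V E u v)"
    unfolding gdist_def by (rule LeastI_ex)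
  then obtain ys where "hd ys = u" "last ys = v" "length ys = 1"
    using assms(4) by auto
  then show ?thesis
    by (metis One_nat_def hd_conv_nth last_conv_nth length_0_conv diff_Suc_1 zero_neq_one)
qed

lemma setdist_zero_iff:
  assumes "connected_graph V E" "finite X" "X \<subseteq> V" "X \<noteq> {}" "v \<in> V"
  shows "setdist V E v X = 0 \<longleftrightarrow> v \<in> X"
proof
  assume "setdist V E v X = 0"
  then have "0 \<in> gdist V E v ` X" unfolding setdist_def
    by (metis Min_in assms(2) assms(4) finite_imageI image_is_empty)
  then obtain x where "x \<in> X" "gdist V E v x = 0" by auto
  then show "v \<in> X" using gdist_zero[OF assms(1) assms(5)] assms(3) by blast
next
  assume "v \<in> X"
  then have "0 \<in> gdist V E v ` X" using gdist_self assms(5) by (metis image_eqI)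
  then show "setdist V E v X = 0" unfolding setdist_def
    by (metis Min_le assms(2) finite_imageI le_zero_eq)
qed

lemma setdist_zero:
  assumes "finite X" "v \<in> X" "v \<in> V"
  shows "setdist V E v X = 0"
proof -
  have "0 \<in> gdist V E v ` X" using gdist_self assms by (metis image_eqI)
  then show ?thesis unfolding setdist_def
    by (metis Min_le assms(1) finite_imageI le_zero_eq)
qed

theorem mainTheorem5:
  fixes V :: "'a set" and E :: "'a \<Rightarrow> 'a \<Rightarrow> bool" and l :: nat
  assumes "simple_graph V E" and "connected_graph V E"
    and "1 \<le> l" and "l \<le> card V - 1"
  shows "solid_metric_dim V E l \<ge> l + 1"
proof -
  have fin: "finite V" using assms(1) by (simp add: simple_graph_def)
  have cV: "card V \<ge> 2" using assms(3,4) by linarith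
  have exV: "solid_resolving V E l V"
    unfolding solid_resolving_def
  proof (intro conjI allI impI)
    fix X Y assume h: "X \<subseteq> V \<and> Y \<subseteq> V \<and> X \<noteq> {} \<and> Y \<noteq> {} \<and> X \<noteq> Y \<and> card X \<le> l"
    show "dist_vec V E V X \<noteq> dist_vec V E V Y"
    proof
      assume eq: "dist_vec V E V X = dist_vec V E V Y"
      have "\<forall>v\<in>V. v \<in> X \<longleftrightarrow> v \<in> Y"
      proof
        fix v assume v: "v \<in> V"
        have "setdist V E v X = setdist V E v Y" using eq v unfolding dist_vec_def by metis
        then show "v \<in> X \<longleftrightarrow> v \<in> Y"
          using setdist_zero_iff[OF assms(2) _ _ _ v, of X] setdist_zero_iff[OF assms(2) _ _ _ v, of Y]
            h fin by (metis finite_subset)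
      qed
      then show False using h by blast
    qed
  qed simp
  have lb: "k \<ge> l + 1" if "solid_resolving V E l S" "card S = k" for S k
  proof (rule ccontr)
    assume "\<not> k \<ge> l + 1"
    then have ck: "card S \<le> l" using that(2) by simp
    have SV: "S \<subseteq> V" using that(1) by (simp add: solid_resolving_def)
    have finS: "finite S" using SV fin finite_subset by blast
    obtain X where X: "X \<subseteq> V" "X \<noteq> {}" "finite X" "card X \<le> l" "X = S \<or> S = {}"
    proof (cases "S = {}")
      case True
      obtain v where "v \<in> V" using cV by fastforce
      then show ?thesis using that[of "{v}"] True assms(3) by auto
    next
      case False
      then show ?thesis using that[of S] SV finS ck by auto
    qed
    have "X \<noteq> V" using X(4) assms(4) cV by auto
    moreover have "dist_vec V E S X = dist_vec V E S V"
    proof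
      fix s show "dist_vec V E S X s = dist_vec V E S V s"
      proof (cases "s \<in> S")
        case True
        then have "s \<in> X" using X(5) by auto
        moreover have "s \<in> V" using True SV by auto
        ultimately show ?thesis using True X(3) fin
          by (simp add: dist_vec_def setdist_zero)
      qed (simp add: dist_vec_def)
    qed
    moreover have "V \<noteq> {}" using cV by auto
    ultimately show False using that(1) X unfolding solid_resolving_def
      by blast
  qed
  have "\<exists>k S. solid_resolving V E l S \<and> card S = k" using exV by blast
  then have "\<exists>S. solid_resolving V E l S \<and> card S = solid_metric_dim V E l"
    unfolding solid_metric_dim_def by (rule LeastI_ex[where P="\<lambda>k. \<exists>S. solid_resolving V E l S \<and> card S = k"])
  then show ?thesis using lb by blast
qed

end
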